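(* For every term $t\in T( *,\circ,x)$ and every $f\in\mathcal{G}(\mathtt{ALD})$ such that $t\cdot f$ is defined, we have $\mathcal{C}(t\cdot f)\sim\mathcal{C}(t)\bullet\mathrm{sh}_0(f)$.
   Context: $T( *,\circ,x)$: terms in the single variable $x$ with binary symbols $*,\circ$. Addresses are finite sequences over $\{0,1\}$, $\varepsilon$ empty; $t/\alpha$ the subterm at $\alpha$. Partial operators act on the right, $f\bullet g$ = "$f$ then $g$", $f^{-1}$ the inverse partial map. $S^{+}_{\alpha}$: defined iff $t/\alpha=t_1*(t_2\square t_3)$, $\square\in\{*,\circ\}$, replacing it by $(t_1*t_2)\square(t_1*t_3)$; $A^{+}_{\alpha}$: defined iff $t/\alpha=t_1*(t_2*t_3)$, replacing it by $(t_1\circ t_2)*t_3$; $S^-_\alpha,A^-_\alpha$ the inverses. $\mathcal{G}(\mathtt{ALD})$ is the monoid of partial maps generated by these. $\mathrm{sh}_\beta(f)$ applies $f$ to the $\beta$-th subterm. The map $\mathcal{C}:T( *,\circ,x)\to\mathcal{G}(\mathtt{ALD})$ is defined by $\mathcal{C}(x)=\mathrm{id}$, $\mathcal{C}(t_1*t_2)=\mathcal{C}(t_1)\bullet\mathrm{sh}_1(\mathcal{C}(t_2))\bullet S^{+}_{\varepsilon}\bullet\mathrm{sh}_1(\mathcal{C}(t_1))^{-1}$, $\mathcal{C}(t_1\circ t_2)=\mathcal{C}(t_1)\bullet\mathrm{sh}_1(\mathcal{C}(t_2))\bullet A^{+}_{\varepsilon}$. For partial maps $f,g$ on terms, $f\sim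 g$ means there exists at least one term $u$ on which both $f$ and $g$ are defined with $u\cdot f=u\cdot g$. *)

theory Defs
  imports Main
begin

datatype trm = X | Star trm trm | Circ trm trm

text \<open>Addresses: finite sequences over {0,1}; we encode 0 as False (left) and 1 as True (right).\<close>
type_synonym addr = "bool list"

text \<open>Partial maps on terms; u \<cdot> f is written f u.\<close>
type_synonym pmap = "trm \<Rightarrow> trm option"

text \<open>f \<bullet> g = "f then g".\<close>
definition pcomp :: "pmap \<Rightarrow> pmap \<Rightarrow> pmap" where
  "pcomp f g = (\<lambda>t. Option.bind (f t) g)"

definition pid :: pmap where
  "pid = (\<lambda>t. Some t)"

definition pinv :: "pmap \<Rightarrow> pmap" where
  "pinv f = (\<lambda>u. if \<exists>t. f t = Some u then Some (SOME t. f t = Some u) else None)"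

fun subterm :: "trm \<Rightarrow> addr \<Rightarrow> trm option" where
  "subterm t [] = Some t"
| "subterm (Star a b) (False # al) = subterm a al"
| "subterm (Star a b) (True # al) = subterm b al"
| "subterm (Circ a b) (False # al) = subterm a al"
| "subterm (Circ a b) (True # al) = subterm b al"
| "subterm X (_ # _) = None"

fun sh :: "addr \<Rightarrow> pmap \<Rightarrow> pmap" where
  "sh [] f t = f t"
| "sh (False # al) f (Star a b) = map_option (\<lambda>a'. Star a' b) (sh al f a)"
| "sh (True # al) f (Star a b) = map_option (\<lambda>b'. Star a b') (sh al f b)"
| "sh (False # al) f (Circ a b) = map_option (\<lambda>a'. Circ a' b) (sh al f a)"
| "sh (True # al) f (Circ a b) = map_option (\<lambda>b'. Circ a b') (sh al f b)"
| "sh (_ # _) f X = None"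

fun Sroot :: pmap where
  "Sroot (Star t1 (Star t2 t3)) = Some (Star (Star t1 t2) (Star t1 t3))"
| "Sroot (Star t1 (Circ t2 t3)) = Some (Circ (Star t1 t2) (Star t1 t3))"
| "Sroot _ = None"

fun Aroot :: pmap where
  "Aroot (Star t1 (Star t2 t3)) = Some (Star (Circ t1 t2) t3)"
| "Aroot _ = None"

definition Splus :: "addr \<Rightarrow> pmap" where "Splus al = sh al Sroot"
definition Aplus :: "addr \<Rightarrow> pmap" where "Aplus al = sh al Aroot"
definition Sminus :: "addr \<Rightarrow> pmap" where "Sminus al = pinv (Splus al)"
definition Aminus :: "addr \<Rightarrow> pmap" where "Aminus al = pinv (Aplus al)"

definition gens :: "pmap set" where
  "gens = (\<Union>al. {Splus al, Aplus al, Sminus al, Aminus al})"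

inductive_set G_ALD :: "pmap set" where
  G_id: "pid \<in> G_ALD"
| G_step: "f \<in> G_ALD \<Longrightarrow> g \<in> gens \<Longrightarrow> pcomp f g \<in> G_ALD"

fun Cmap :: "trm \<Rightarrow> pmap" where
  "Cmap X = pid"
| "Cmap (Star t1 t2) =
     pcomp (pcomp (pcomp (Cmap t1) (sh [True] (Cmap t2))) (Splus [])) (pinv (sh [True] (Cmap t1)))"
| "Cmap (Circ t1 t2) = pcomp (pcomp (Cmap t1) (sh [True] (Cmap t2))) (Aplus [])"

definition psim :: "pmap \<Rightarrow> pmap \<Rightarrow> bool" where
  "psim f g = (\<exists>u v. f u = Some v \<and> g u = Some v)"

end

theory Submission
  imports Defs
begin

fun R :: "nat \<Rightarrow> trm" where
  "R 0 = X"
| "R (Suc n) = Star X (R n)"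

fun kk :: "trm \<Rightarrow> nat" where
  "kk X = 1"
| "kk (Star a b) = kk b"
| "kk (Circ a b) = kk a + kk b"

fun MM :: "trm \<Rightarrow> nat" where
  "MM X = 1"
| "MM (Star a b) = MM a + MM b + kk a + kk b"
| "MM (Circ a b) = MM a + MM b + kk a + kk b"

definition pinj :: "pmap \<Rightarrow> bool" where
  "pinj f = (\<forall>a b c. f a = Some c \<longrightarrow> f b = Some c \<longrightarrow> a = b)"

lemma pinv_pinj: "pinj (pinv f)"
  unfolding pinj_def pinv_def
  by (auto split: if_splits) (metis (mono_tags, lifting) someI_ex option.inject)

lemma pinv_app: "pinj f \<Longrightarrow> f a = Some b \<Longrightarrow> pinv f b = Some a"
  unfolding pinj_def pinv_def
  by (auto intro: someI2)

lemma pcomp_pinj: "pinj f \<Longrightarrow> pinj g \<Longrightarrow> pinj (pcomp f g)"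
  unfolding pinj_def pcomp_def
  by (auto simp: bind_eq_Some_conv)

lemma pid_pinj: "pinj pid" unfolding pinj_def pid_def by auto

lemma Sroot_pinj: "pinj Sroot"
  unfolding pinj_def
proof (intro allI impI)
  fix a b c assume "Sroot a = Some c" "Sroot b = Some c"
  then show "a = b"
    by (cases a rule: Sroot.cases; cases b rule: Sroot.cases; auto)
qed

lemma Aroot_pinj: "pinj Aroot"
  unfolding pinj_def
proof (intro allI impI)
  fix a b c assume "Aroot a = Some c" "Aroot b = Some c"
  then show "a = b"
    by (cases a rule: Aroot.cases; cases b rule: Aroot.cases; auto)
qed

lemma sh_inj_aux: "sh al f a = Some c \<Longrightarrow> sh al f b = Some c \<Longrightarrow> pinj f \<Longrightarrow> a = b"
proof (induction al f a arbitrary: b c rule: sh.induct)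
  case (1 f t) then show ?case by (auto simp: pinj_def)
next
  case (2 al f a1 a2) then show ?case by (cases b) auto
next
  case (3 al f a1 a2) then show ?case by (cases b) auto
next
  case (4 al f a1 a2) then show ?case by (cases b) auto
next
  case (5 al f a1 a2) then show ?case by (cases b) auto
next
  case (6 uu uv f) then show ?case by simp
qed

lemma sh_pinj: "pinj f \<Longrightarrow> pinj (sh al f)"
  using sh_inj_aux unfolding pinj_def by blast

lemma Cmap_pinj: "pinj (Cmap t)"
  by (induction t) (auto intro!: pcomp_pinj sh_pinj pinv_pinj pid_pinj Sroot_pinj Aroot_pinj
      simp: Splus_def Aplus_def)

lemma Cmap_R: "MM t \<le> n \<Longrightarrow> Cmap t (R n) = Some (Star t (R (n - kk t)))"
proof (induction t arbitrary: n)
  case X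
  then obtain m where "n = Suc m" by (cases n) auto
  then show ?case by (simp add: pid_def)
next
  case (Star t1 t2)
  have h1: "Cmap t1 (R n) = Some (Star t1 (R (n - kk t1)))" using Star by simp
  have h2: "Cmap t2 (R (n - kk t1)) = Some (Star t2 (R (n - kk t1 - kk t2)))"
    using Star by simp
  have h3: "Cmap t1 (R (n - kk t2)) = Some (Star t1 (R (n - kk t2 - kk t1)))"
    using Star by simp
  have eq: "n - kk t2 - kk t1 = n - kk t1 - kk t2" by simp
  have h4: "sh [True] (Cmap t1) (Star (Star t1 t2) (R (n - kk t2)))
      = Some (Star (Star t1 t2) (Star t1 (R (n - kk t1 - kk t2))))"
    using h3 eq by simp
  have h5: "pinv (sh [True] (Cmap t1)) (Star (Star t1 t2) (Star t1 (R (n - kk t1 - kk t2))))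
      = Some (Star (Star t1 t2) (R (n - kk t2)))"
    by (rule pinv_app[OF sh_pinj[OF Cmap_pinj] h4])
  show ?case using h1 h2 h5 by (simp add: pcomp_def Splus_def)
next
  case (Circ t1 t2)
  have h1: "Cmap t1 (R n) = Some (Star t1 (R (n - kk t1)))" using Circ by simp
  have h2: "Cmap t2 (R (n - kk t1)) = Some (Star t2 (R (n - kk t1 - kk t2)))"
    using Circ by simp
  show ?case using h1 h2 by (simp add: pcomp_def Aplus_def diff_diff_add)
qed

definition kpres :: "pmap \<Rightarrow> bool" where
  "kpres f = (\<forall>a b. f a = Some b \<longrightarrow> kk a = kk b)"

lemma sh_kpres_aux: "sh al f a = Some c \<Longrightarrow> kpres f \<Longrightarrow> kk a = kk c"
proof (induction al f a arbitrary: c rule: sh.induct)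
  case (1 f t) then show ?case by (auto simp: kpres_def)
qed auto

lemma sh_kpres: "kpres f \<Longrightarrow> kpres (sh al f)"
  using sh_kpres_aux unfolding kpres_def by blast

lemma Sroot_kpres: "kpres Sroot"
  unfolding kpres_def
proof (intro allI impI)
  fix a b assume "Sroot a = Some b"
  then show "kk a = kk b" by (cases a rule: Sroot.cases) auto
qed

lemma Aroot_kpres: "kpres Aroot"
  unfolding kpres_def
proof (intro allI impI)
  fix a b assume "Aroot a = Some b"
  then show "kk a = kk b" by (cases a rule: Aroot.cases) auto
qed

lemma pinv_kpres: "kpres f \<Longrightarrow> kpres (pinv f)"
  unfolding kpres_def pinv_def
  by (auto split: if_splits) (metis (mono_tags, lifting) someI_ex)

lemma pcomp_kpres: "kpres f \<Longrightarrow> kpres g \<Longrightarrow> kpres (pcomp f g)"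
  unfolding kpres_def pcomp_def by (auto simp: bind_eq_Some_conv)

lemma gens_kpres: "g \<in> gens \<Longrightarrow> kpres g"
  unfolding gens_def Splus_def Aplus_def Sminus_def Aminus_def
  by (auto intro!: sh_kpres pinv_kpres Sroot_kpres Aroot_kpres)

lemma G_kpres: "f \<in> G_ALD \<Longrightarrow> kpres f"
proof (induction rule: G_ALD.induct)
  case G_id then show ?case by (simp add: kpres_def pid_def)
next
  case (G_step f g) then show ?case by (blast intro: pcomp_kpres gens_kpres)
qed

theorem lemma3p5:
  fixes t t' :: trm and f :: pmap
  assumes "f \<in> G_ALD" and "f t = Some t'"
  shows "psim (Cmap t') (pcomp (Cmap t) (sh [False] f))"
proof -
  define n where "n = MM t + MM t'"
  have k: "kk t = kk t'" using G_kpres[OF assms(1)] assms(2) by (auto simp: kpres_def)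
  have a: "Cmap t' (R n) = Some (Star t' (R (n - kk t')))" by (rule Cmap_R) (simp add: n_def)
  have b: "Cmap t (R n) = Some (Star t (R (n - kk t)))" by (rule Cmap_R) (simp add: n_def)
  have c: "pcomp (Cmap t) (sh [False] f) (R n) = Some (Star t' (R (n - kk t')))"
    using b k assms(2) by (simp add: pcomp_def)
  show ?thesis unfolding psim_def using a c by blast
qed

end
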